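(* Let $M$ be a strongly primary monoid in $\mathcal{C}$ and let $V=\mathbb{R}\otimes_\mathbb{Z}\mathrm{gp}(M)$. The following are equivalent: (a) $\mathcal{M}(M)<\infty$; (b) $\dim\mathsf{cone}_V(M)=1$; (c) $M$ is isomorphic to a numerical monoid.
   Context: Convention: all monoids are commutative, cancellative, and reduced, written additively; $M^\bullet=M\setminus\{0\}$; atoms $\mathcal{A}(M)=M^\bullet\setminus(M^\bullet+M^\bullet)$. $\mathcal{C}$ is the class of monoids isomorphic to a submonoid of a free commutative monoid of finite rank (equivalently, of $(\mathbb{N}^d,+)$). $M$ is regarded as a submonoid of $V$; $\mathsf{cone}_V(M)$ is the set of finite nonnegative linear combinations of elements of $M$. A monoid is primary if it is nontrivial and for all $x,y\in M^\bullet$ there is $n\in\mathbb{N}$ with $ny\in x+M$; it is a BFM if every element is a sum of atoms and each element has finitely many factorization lengths; it is finitary if it is a BFM and there exist a finite $S\subseteq M$ and a positive integer $n$ with $nM^\bullet\subseteq S+M$ (where $nM^\bullet=\{x_1+\dots+x_n:x_i\in M^\bullet\}$); strongly primary means primary and finitary. For $x\in M^\bullet$, $\mathcal{M}(x)$ is the smallest $n\in\mathbb{N}$ with $nM^\bullet\subseteq x+M$ ($\infty$ if none), and $\mathcal{M}(M)=\sup\{\mathcal{M}(a): a\in\mathcal{A}(M)\}\in\mathbb{N}\cup\{\infty\}$. A numerical monoid is a submonoid of $(\mathbb{N},+)$ with finite complement in $\mathbb{N}$. *)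

theory Defs
  imports "HOL-Analysis.Analysis" "HOL-Library.Extended_Nat"
begin

text \<open>Monoids in the class C are modelled as submonoids of (N^d,+), with d = CARD('d).\<close>

definition submonoid :: "'a::comm_monoid_add set \<Rightarrow> bool" where
  "submonoid M \<longleftrightarrow> 0 \<in> M \<and> (\<forall>x\<in>M. \<forall>y\<in>M. x + y \<in> M)"

definition translate :: "'a::comm_monoid_add \<Rightarrow> 'a set \<Rightarrow> 'a set" where
  "translate x M = {x + m | m. m \<in> M}"

definition setsum :: "'a::comm_monoid_add set \<Rightarrow> 'a set \<Rightarrow> 'a set" where
  "setsum S M = {s + m | s m. s \<in> S \<and> m \<in> M}"

definition atoms :: "'a::comm_monoid_add set \<Rightarrow> 'a set" where
  "atoms M = {a. a \<in> M \<and> a \<noteq> 0 \<and>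
      \<not> (\<exists>b c. b \<in> M \<and> b \<noteq> 0 \<and> c \<in> M \<and> c \<noteq> 0 \<and> a = b + c)}"

definition nsums :: "nat \<Rightarrow> 'a::comm_monoid_add set \<Rightarrow> 'a set" where
  "nsums n M = {sum_list xs | xs. length xs = n \<and> set xs \<subseteq> M - {0}}"

definition primary :: "'a::comm_monoid_add set \<Rightarrow> bool" where
  "primary M \<longleftrightarrow> M \<noteq> {0} \<and>
     (\<forall>x\<in>M - {0}. \<forall>y\<in>M - {0}. \<exists>n::nat. sum_list (replicate n y) \<in> translate x M)"

definition fact_lengths :: "'a::comm_monoid_add set \<Rightarrow> 'a \<Rightarrow> nat set" where
  "fact_lengths M x = {length xs | xs. set xs \<subseteq> atoms M \<and> sum_list xs = x}"

definition BFM :: "'a::comm_monoid_add set \<Rightarrow> bool" where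
  "BFM M \<longleftrightarrow> (\<forall>x\<in>M. fact_lengths M x \<noteq> {} \<and> finite (fact_lengths M x))"

definition finitary :: "'a::comm_monoid_add set \<Rightarrow> bool" where
  "finitary M \<longleftrightarrow> BFM M \<and>
     (\<exists>S n. finite S \<and> S \<subseteq> M \<and> n > 0 \<and> nsums n M \<subseteq> setsum S M)"

definition strongly_primary :: "'a::comm_monoid_add set \<Rightarrow> bool" where
  "strongly_primary M \<longleftrightarrow> primary M \<and> finitary M"

definition elem_M :: "'a::comm_monoid_add set \<Rightarrow> 'a \<Rightarrow> enat" where
  "elem_M M x = (if \<exists>n. nsums n M \<subseteq> translate x M
                 then enat (LEAST n. nsums n M \<subseteq> translate x M) else \<infinity>)"

definition monoid_M :: "'a::comm_monoid_add set \<Rightarrow> enat" where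
  "monoid_M M = (SUP a\<in>atoms M. elem_M M a)"

definition numerical_monoid :: "nat set \<Rightarrow> bool" where
  "numerical_monoid N \<longleftrightarrow> submonoid N \<and> finite (UNIV - N)"

definition monoid_iso :: "'a::comm_monoid_add set \<Rightarrow> 'b::comm_monoid_add set \<Rightarrow> ('a \<Rightarrow> 'b) \<Rightarrow> bool" where
  "monoid_iso M N f \<longleftrightarrow> bij_betw f M N \<and> (\<forall>x\<in>M. \<forall>y\<in>M. f (x + y) = f x + f y)"

definition cone_of :: "'a::real_vector set \<Rightarrow> 'a set" where
  "cone_of S = {(\<Sum>i<k. c i *\<^sub>R v i) | (k::nat) c v. \<forall>i<k. c i \<ge> 0 \<and> v i \<in> S}"

definition real_vec :: "nat ^ 'd \<Rightarrow> real ^ 'd" where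
  "real_vec x = (\<chi> i. real (x $ i))"

end

theory Submission imports Defs
begin

definition collin :: "(nat ^ 'd) set \<Rightarrow> bool" where
  "collin M \<longleftrightarrow> (\<forall>x\<in>M. \<forall>y\<in>M. \<forall>i j. x$i * y$j = x$j * y$i)"

lemma sub_cone: "S \<subseteq> cone_of S"
proof
  fix x assume x: "x \<in> S"
  show "x \<in> cone_of S" unfolding cone_of_def
    by (rule CollectI, rule exI[of _ "1::nat"], rule exI[of _ "\<lambda>_. 1::real"], rule exI[of _ "\<lambda>_. x"]) (use x in simp)
qed

lemma cone_sub_span: "cone_of S \<subseteq> span S"
proof
  fix x assume "x \<in> cone_of S"
  then obtain k :: nat and c v where x: "x = (\<Sum>i<k. c i *\<^sub>R v i)" and h: "\<forall>i<k. c i \<ge> 0 \<and> v i \<in> S"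
    unfolding cone_of_def by auto
  show "x \<in> span S" unfolding x
    by (rule span_sum) (use h in \<open>auto intro: span_scale span_base\<close>)
qed

lemma real_vec_nz: "real_vec x = 0 \<longleftrightarrow> x = 0"
  unfolding real_vec_def vec_eq_iff by simp

lemma dim_one_if:
  assumes c: "collin M" and x0: "x0 \<in> M" "x0 \<noteq> 0"
  shows "dim (cone_of (real_vec ` M)) = 1"
proof -
  obtain j where j: "x0$j \<noteq> 0" using x0 by (auto simp: vec_eq_iff)
  let ?v = "real_vec x0"
  have vnz: "?v \<noteq> 0" using x0 real_vec_nz by blast
  have V: "real_vec ` M \<subseteq> span {?v}"
  proof
    fix z assume "z \<in> real_vec ` M"
    then obtain y where y: "y \<in> M" "z = real_vec y" by blast
    have "z = (real (y$j) / real (x0$j)) *\<^sub>R ?v"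
    proof -
      have "\<forall>i. real (y$i) = real (y$j) / real (x0$j) * real (x0$i)"
      proof
        fix i
        have "y$i * x0$j = y$j * x0$i" using c y(1) x0(1) unfolding collin_def by blast
        then have "real (y$i) * real (x0$j) = real (y$j) * real (x0$i)"
          by (metis of_nat_mult)
        then show "real (y$i) = real (y$j) / real (x0$j) * real (x0$i)"
          using j by (simp add: field_simps)
      qed
      then show ?thesis using y(2) unfolding real_vec_def vec_eq_iff
        by (metis scaleR_vec_def vec_lambda_beta real_scaleR_def)
    qed
    then show "z \<in> span {?v}" unfolding span_singleton by blast
  qed
  show ?thesis
  proof (rule dim_unique[of "{?v}"])
    show "{?v} \<subseteq> cone_of (real_vec ` M)" using x0(1) sub_cone[of "real_vec ` M"] by auto
    show "cone_of (real_vec ` M) \<subseteq> span {?v}"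
      using subset_trans[OF cone_sub_span span_minimal[OF V subspace_span]] .
    show "independent {?v}" using vnz by (simp add: independent_insert)
    show "card {?v} = 1" by simp
  qed
qed

lemma collin_if_dim:
  assumes d: "dim (cone_of (real_vec ` M)) = 1"
  shows "collin M"
  unfolding collin_def
proof (intro ballI allI, rule ccontr)
  fix x y i j assume xy: "x \<in> M" "y \<in> M" and ne: "x$i * y$j \<noteq> x$j * y$i"
  let ?x = "real_vec x" and ?y = "real_vec y"
  have ynz: "?y \<noteq> 0"
  proof
    assume "?y = 0" then have "y = 0" using real_vec_nz by blast
    then show False using ne by simp
  qed
  have xns: "?x \<notin> span {?y}"
  proof
    assume "?x \<in> span {?y}"
    then obtain k where k: "?x = k *\<^sub>R ?y" by (auto simp: span_singleton)
    then have "real (x$i) = k * real (y$i)" "real (x$j) = k * real (y$j)"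
      by (auto simp: real_vec_def vec_eq_iff)
    then have "real (x$i) * real (y$j) = real (x$j) * real (y$i)" by simp
    then have "real (x$i * y$j) = real (x$j * y$i)" by simp
    then show False using ne by linarith
  qed
  then have neq: "?x \<noteq> ?y" by (metis insertI1 span_base)
  have ind: "independent {?x, ?y}"
    using xns ynz by (simp add: independent_insert)
  have "{?x, ?y} \<subseteq> cone_of (real_vec ` M)" using xy sub_cone[of "real_vec ` M"] by auto
  then have "card {?x, ?y} \<le> dim (cone_of (real_vec ` M))"
    using ind by (rule independent_card_le_dim)
  then show False using neq d by simp
qed

lemma sum_list_nth: "(sum_list xs :: nat^'d) $ i = sum_list (map (\<lambda>x. x$i) xs)"
  by (induction xs) auto

lemma rep_nth: "(sum_list (replicate n (a::nat^'d))) $ i = n * a$i"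
  by (induction n) auto

lemma sum_list_in: "submonoid M \<Longrightarrow> set xs \<subseteq> M \<Longrightarrow> sum_list xs \<in> M"
  by (induction xs) (auto simp: submonoid_def)

lemma translate_iff: "z \<in> translate x M \<longleftrightarrow> (\<exists>m\<in>M. z = x + m)"
  by (auto simp: translate_def)

lemma rep_nsums: "b \<in> M \<Longrightarrow> b \<noteq> 0 \<Longrightarrow> sum_list (replicate n b) \<in> nsums n M"
  unfolding nsums_def by (rule CollectI, rule exI[of _ "replicate n b"]) auto

lemma finite_box: "finite {x::nat^'d. \<forall>i. x$i \<le> B i}"
proof -
  have "{x::nat^'d. \<forall>i. x$i \<le> B i} \<subseteq> (\<lambda>f. vec_lambda f) ` (PiE UNIV (\<lambda>i. {..B i}))"
  proof
    fix x :: "nat^'d" assume "x \<in> {x. \<forall>i. x$i \<le> B i}"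
    then have "vec_nth x \<in> PiE UNIV (\<lambda>i. {..B i})" by auto
    then show "x \<in> (\<lambda>f. vec_lambda f) ` (PiE UNIV (\<lambda>i. {..B i}))"
      by (metis image_eqI vec_nth_inverse)
  qed
  moreover have "finite (PiE (UNIV::'d set) (\<lambda>i. {..B i}))" by (rule finite_PiE) auto
  ultimately show ?thesis by (meson finite_imageI finite_subset)
qed

lemma support:
  fixes M :: "(nat^'d) set"
  assumes "primary M" "z \<in> M" "z \<noteq> 0" "w \<in> M" "w \<noteq> 0" "z$k > 0"
  shows "w$k > 0"
proof -
  obtain n where "sum_list (replicate n w) \<in> translate z M"
    using assms unfolding primary_def by blast
  then obtain m where "sum_list (replicate n w) = z + m" by (auto simp: translate_iff)
  then have "n * w$k = z$k + m$k" by (metis rep_nth vector_add_component)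
  then show ?thesis using assms(6) by (cases "w$k") auto
qed

lemma atoms_decomp:
  assumes "BFM M" "x \<in> M"
  obtains xs where "set xs \<subseteq> atoms M" "sum_list xs = x"
  using assms unfolding BFM_def fact_lengths_def by blast

lemma atoms_sub: "atoms M \<subseteq> M" by (auto simp: atoms_def)

lemma finite_atoms:
  fixes M :: "(nat^'d) set"
  assumes sm: "submonoid M" and sp: "strongly_primary M" and fin: "monoid_M M < \<infinity>"
  shows "finite (atoms M)"
proof -
  obtain K where K: "monoid_M M = enat K" using fin by (cases "monoid_M M") auto
  have pr: "primary M" using sp by (simp add: strongly_primary_def)
  then obtain b where b: "b \<in> M" "b \<noteq> 0" using sm unfolding primary_def submonoid_def by blast
  have "atoms M \<subseteq> {x. \<forall>i. x$i \<le> K * b$i}"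
  proof
    fix a assume a: "a \<in> atoms M"
    then have "elem_M M a \<le> enat K" using K unfolding monoid_M_def by (metis SUP_upper)
    then have ex: "\<exists>n. nsums n M \<subseteq> translate a M" and le: "(LEAST n. nsums n M \<subseteq> translate a M) \<le> K"
      unfolding elem_M_def by (auto split: if_splits)
    define n where "n = (LEAST n. nsums n M \<subseteq> translate a M)"
    have "nsums n M \<subseteq> translate a M" unfolding n_def using ex by (metis LeastI)
    then have "sum_list (replicate n b) \<in> translate a M" using rep_nsums b by blast
    then obtain m where "sum_list (replicate n b) = a + m" by (auto simp: translate_iff)
    then have "\<forall>i. n * b$i = a$i + m$i" by (metis rep_nth vector_add_component)
    moreover have "n \<le> K" using le n_def by simp
    ultimately show "a \<in> {x. \<forall>i. x$i \<le> K * b$i}"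
      by (auto intro: le_trans[OF _ mult_le_mono1] simp: le_add1) (metis le_add1 mult_le_mono1 order_trans)
  qed
  then show ?thesis using finite_box[of "\<lambda>i. K * b$i"] by (rule finite_subset)
qed


lemma sum_list_ge:
  "(\<forall>t\<in>set xs. real (t$i) \<ge> r * real (t$j)) \<Longrightarrow>
   real ((sum_list xs :: nat^'d)$i) \<ge> r * real ((sum_list xs)$j)"
  by (induction xs) (auto simp: distrib_left add_mono)

lemma sum_list_eq:
  "(\<forall>t\<in>set xs. real (t$i) = r * real (t$j)) \<Longrightarrow>
   real ((sum_list xs :: nat^'d)$i) = r * real ((sum_list xs)$j)"
  by (induction xs) (auto simp: distrib_left)

lemma collin_of_finite:
  fixes M :: "(nat^'d) set"
  assumes sm: "submonoid M" and pr: "primary M" and bfm: "BFM M" and fa: "finite (atoms M)"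
  shows "collin M"
  unfolding collin_def
proof (intro ballI allI)
  fix x y i j assume x: "x \<in> M" and y: "y \<in> M"
  obtain x0 where x0: "x0 \<in> M" "x0 \<noteq> 0" using pr sm unfolding primary_def submonoid_def by blast
  show "x$i * y$j = x$j * y$i"
  proof (cases "x0$j = 0")
    case True
    have "\<forall>z\<in>M. z$j = 0"
    proof
      fix z assume z: "z \<in> M"
      show "z$j = 0"
      proof (rule ccontr)
        assume "z$j \<noteq> 0"
        then have "z \<noteq> 0" "z$j > 0" by auto
        then have "x0$j > 0" using support[OF pr z _ x0] by blast
        then show False using True by simp
      qed
    qed
    then show ?thesis using x y by simp
  next
    case False
    have pos: "\<forall>z\<in>M. z \<noteq> 0 \<longrightarrow> z$j > 0"
      using support[OF pr x0 _ _ ] False by blast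
    define \<rho> where "\<rho> z = real (z$i) / real (z$j)" for z :: "nat^'d"
    obtain xs where xs: "set xs \<subseteq> atoms M" "sum_list xs = x0" using atoms_decomp[OF bfm x0(1)] by blast
    have ne: "atoms M \<noteq> {}" using xs x0 by (cases xs) auto
    define r where "r = Min (\<rho> ` atoms M)"
    have atpos: "\<forall>t\<in>atoms M. t$j > 0" using pos atoms_sub by (auto simp: atoms_def)
    have atge: "\<forall>t\<in>atoms M. real (t$i) \<ge> r * real (t$j)"
    proof
      fix t assume t: "t \<in> atoms M"
      have "r \<le> \<rho> t" unfolding r_def using fa t by simp
      then show "real (t$i) \<ge> r * real (t$j)" using atpos t by (simp add: \<rho>_def field_simps)
    qed
    have Mge: "\<forall>z\<in>M. real (z$i) \<ge> r * real (z$j)"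
    proof
      fix z assume "z \<in> M"
      then obtain zs where "set zs \<subseteq> atoms M" "sum_list zs = z" using atoms_decomp[OF bfm] by blast
      then show "real (z$i) \<ge> r * real (z$j)" using sum_list_ge[where xs=zs and i=i and r=r and j=j] atge by blast
    qed
    have ateq: "\<forall>t\<in>atoms M. real (t$i) = r * real (t$j)"
    proof (rule ccontr)
      assume "\<not> ?thesis"
      then obtain c where c: "c \<in> atoms M" "real (c$i) \<noteq> r * real (c$j)" by blast
      then have cgt: "real (c$i) > r * real (c$j)" using atge by force
      have "r \<in> \<rho> ` atoms M" unfolding r_def using fa ne by simp
      then obtain a where a: "a \<in> atoms M" "\<rho> a = r" by blast
      have aeq: "real (a$i) = r * real (a$j)" using a atpos by (auto simp: \<rho>_def field_simps)
      have "a \<in> M" "a \<noteq> 0" "c \<in> M" "c \<noteq> 0" using a c atoms_sub by (auto simp: atoms_def)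
      then obtain n where "sum_list (replicate n a) \<in> translate c M"
        using pr unfolding primary_def by blast
      then obtain m where m: "m \<in> M" "sum_list (replicate n a) = c + m" by (auto simp: translate_iff)
      then have e1: "n * a$i = c$i + m$i" "n * a$j = c$j + m$j" by (metis rep_nth vector_add_component)+
      have "real n * real (a$i) = real (c$i) + real (m$i)" using e1(1) by (metis of_nat_add of_nat_mult)
      also have "\<dots> > r * real (c$j) + r * real (m$j)" using cgt Mge m(1) by (simp add: add_less_le_mono)
      also have "r * real (c$j) + r * real (m$j) = r * real (n * a$j)" using e1(2) by (simp add: distrib_left)
      also have "\<dots> = real n * real (a$i)" using aeq by simp
      finally show False by simp
    qed
    have Meq: "\<forall>z\<in>M. real (z$i) = r * real (z$j)"
    proof
      fix z assume "z \<in> M"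
      then obtain zs where "set zs \<subseteq> atoms M" "sum_list zs = z" using atoms_decomp[OF bfm] by blast
      then show "real (z$i) = r * real (z$j)" using sum_list_eq[where xs=zs and i=i and r=r and j=j] ateq by blast
    qed
    have "real (x$i) * real (y$j) = real (x$j) * real (y$i)" using Meq x y by simp
    then have "real (x$i * y$j) = real (x$j * y$i)" by simp
    then show ?thesis by (metis of_nat_eq_iff)
  qed
qed


lemma rep_in: "submonoid M \<Longrightarrow> x \<in> M \<Longrightarrow> sum_list (replicate q x) \<in> M"
  by (rule sum_list_in) auto

lemma iso_rep:
  fixes M :: "(nat^'d) set" and f :: "nat^'d \<Rightarrow> nat"
  assumes sm: "submonoid M" and iso: "monoid_iso M N f" and x: "x \<in> M"
  shows "f (sum_list (replicate q x)) = q * f x"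
proof -
  have z: "0 \<in> M" using sm by (simp add: submonoid_def)
  have "f (0 + 0) = f 0 + f 0" using iso z unfolding monoid_iso_def by blast
  then have f0: "f 0 = 0" by simp
  show ?thesis
  proof (induction q)
    case 0 then show ?case using f0 by simp
  next
    case (Suc q)
    have "f (x + sum_list (replicate q x)) = f x + f (sum_list (replicate q x))"
      using iso x rep_in[OF sm x] unfolding monoid_iso_def by blast
    then show ?case using Suc by simp
  qed
qed

lemma collin_of_iso:
  fixes M :: "(nat^'d) set" and f :: "nat^'d \<Rightarrow> nat"
  assumes sm: "submonoid M" and iso: "monoid_iso M N f"
  shows "collin M"
  unfolding collin_def
proof (intro ballI allI)
  fix x y i j assume x: "x \<in> M" and y: "y \<in> M"
  have z: "0 \<in> M" using sm by (simp add: submonoid_def)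
  have inj: "inj_on f M" using iso by (simp add: monoid_iso_def bij_betw_def)
  have f0: "f 0 = 0" using iso_rep[OF sm iso z, of 0] by simp
  let ?p = "f x" and ?q = "f y"
  have "f (sum_list (replicate ?q x)) = f (sum_list (replicate ?p y))"
    using iso_rep[OF sm iso x] iso_rep[OF sm iso y] by simp
  then have "sum_list (replicate ?q x) = sum_list (replicate ?p y)"
    using inj rep_in[OF sm x] rep_in[OF sm y] by (meson inj_onD)
  then have e: "\<forall>k. ?q * x$k = ?p * y$k" by (metis rep_nth)
  show "x$i * y$j = x$j * y$i"
  proof (cases "?q = 0 \<or> ?p = 0")
    case True
    then show ?thesis
    proof
      assume "?q = 0" then have "y = 0" using inj f0 y z by (metis inj_onD)
      then show ?thesis by simp
    next
      assume "?p = 0" then have "x = 0" using inj f0 x z by (metis inj_onD)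
      then show ?thesis by simp
    qed
  next
    case False
    have "(?q * ?p) * (x$i * y$j) = (?q * x$i) * (?p * y$j)" by (simp add: ac_simps)
    also have "\<dots> = (?p * y$i) * (?q * x$j)" using e by simp
    also have "\<dots> = (?q * ?p) * (x$j * y$i)" by (simp add: ac_simps)
    finally show ?thesis using False by simp
  qed
qed

lemma mult_in: "submonoid (N::nat set) \<Longrightarrow> p \<in> N \<Longrightarrow> k * p \<in> N"
  by (induction k) (auto simp: submonoid_def)

lemma collin_setup:
  fixes M :: "(nat^'d) set"
  assumes sm: "submonoid M" and c: "collin M" and x0: "x0 \<in> M" and j: "x0$j > 0"
  shows "\<exists>g>0. (\<forall>x\<in>M. g dvd x$j) \<and> (\<exists>F\<ge>1. \<forall>n\<ge>F. g*n \<in> (\<lambda>x. x$j)`M)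
           \<and> inj_on (\<lambda>x. x$j) M"
proof -
  let ?N = "(\<lambda>x. x$j)`M"
  have inj: "inj_on (\<lambda>x. x$j) M"
  proof (rule inj_onI)
    fix x y assume xy: "x \<in> M" "y \<in> M" "x$j = y$j"
    have "\<forall>i. x$i = y$i"
    proof
      fix i
      have "x$i * x0$j = x$j * x0$i" "y$i * x0$j = y$j * x0$i"
        using c xy x0 unfolding collin_def by blast+
      then have "x$i * x0$j = y$i * x0$j" using xy by simp
      then show "x$i = y$i" using j by simp
    qed
    then show "x = y" by (simp add: vec_eq_iff)
  qed
  have Nsm: "submonoid ?N"
    unfolding submonoid_def
  proof (intro conjI ballI)
    show "0 \<in> ?N" using sm unfolding submonoid_def by force
    fix a b assume "a \<in> ?N" "b \<in> ?N"
    then obtain x y where "x \<in> M" "y \<in> M" "a = x$j" "b = y$j" by blast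
    then show "a + b \<in> ?N" using sm unfolding submonoid_def by force
  qed
  define P where "P g \<longleftrightarrow> 0 < g \<and> (\<exists>p\<in>?N. \<exists>q\<in>?N. p = q + g)" for g
  have "P (x0$j)" unfolding P_def using j x0 Nsm by (force simp: submonoid_def)
  then have Pg: "P (LEAST g. P g)" by (rule LeastI)
  define g where "g = (LEAST g. P g)"
  have Pg: "P g" using Pg g_def by simp
  then have g0: "g > 0" by (simp add: P_def)
  obtain p q where pq: "p \<in> ?N" "q \<in> ?N" "p = q + g" using Pg P_def by blast
  have dv: "\<forall>n\<in>?N. g dvd n"
  proof
    fix n assume n: "n \<in> ?N"
    define k where "k = n div g"
    define r where "r = n mod g"
    have nk: "n = k*g + r" unfolding k_def r_def by simp
    have "r = 0"
    proof (rule ccontr)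
      assume "r \<noteq> 0"
      have "n + k*q \<in> ?N" using n mult_in[OF Nsm pq(2)] Nsm unfolding submonoid_def by blast
      moreover have "k*p \<in> ?N" using mult_in[OF Nsm pq(1)] .
      moreover have "n + k*q = k*p + r" using nk pq(3) by (simp add: algebra_simps)
      moreover have "0 < r" using \<open>r \<noteq> 0\<close> by simp
      ultimately have "P r" unfolding P_def by blast
      then have "g \<le> r" unfolding g_def by (rule Least_le)
      moreover have "r < g" unfolding r_def using g0 by simp
      ultimately show False by simp
    qed
    then show "g dvd n" using nk by simp
  qed
  obtain p' where p': "p = g*p'" using dv pq(1) by blast
  obtain q' where q': "q = g*q'" using dv pq(2) by blast
  have pq': "p' = q' + 1" using p' q' pq(3) g0 by (metis add_mult_distrib2 mult.right_neutral mult_left_cancel not_gr0)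
  have F: "\<forall>n\<ge>q'*q'+1. g*n \<in> ?N"
  proof (intro allI impI)
    fix n :: nat assume n: "n \<ge> q'*q'+1"
    show "g*n \<in> ?N"
    proof (cases "q' = 0")
      case True
      then have "p = g" using p' pq' by simp
      then show ?thesis using mult_in[OF Nsm pq(1), of n] by (simp add: mult.commute)
    next
      case False
      define k where "k = n div q'"
      define r where "r = n mod q'"
      have nk: "n = k*q' + r" unfolding k_def r_def by simp
      have rl: "r < q'" unfolding r_def using False by simp
      have "q'*q' \<le> n" using n by simp
      then have "q' \<le> k" unfolding k_def using False by (simp add: div_le_mono[of "q'*q'" n q', simplified] less_eq_div_iff_mult_less_eq)
      then have kr: "r \<le> k" using rl by simp
      have "g*n = (k - r)*q + r*p" using nk kr p' q' pq'
        by (simp add: algebra_simps diff_mult_distrib2 diff_mult_distrib)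
      moreover have "(k - r)*q \<in> ?N" "r*p \<in> ?N" using mult_in[OF Nsm] pq by auto
      ultimately show ?thesis using Nsm unfolding submonoid_def by (metis (no_types, lifting))
    qed
  qed
  show ?thesis using g0 dv F inj by (intro exI[of _ g]) (auto intro!: exI[of _ "q'*q'+1"])
qed


lemma collin_numerical:
  fixes M :: "(nat^'d) set"
  assumes sm: "submonoid M" and c: "collin M" and x0: "x0 \<in> M" and j: "x0$j > 0"
  shows "\<exists>N f. numerical_monoid N \<and> monoid_iso M N f"
proof -
  obtain g F where g0: "g > 0" and dv: "\<forall>x\<in>M. g dvd x$j" and F: "\<forall>n\<ge>F. g*n \<in> (\<lambda>x. x$j)`M"
    and inj: "inj_on (\<lambda>x. x$j) M"
    using collin_setup[OF sm c x0 j] by blast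
  define f where "f x = x$j div g" for x :: "nat^'d"
  define N where "N = f ` M"
  have add: "\<forall>x\<in>M. \<forall>y\<in>M. f (x + y) = f x + f y"
    using dv by (auto simp: f_def div_add)
  have injf: "inj_on f M"
  proof (rule inj_onI)
    fix x y assume xy: "x \<in> M" "y \<in> M" "f x = f y"
    then have "x$j = y$j" using dv unfolding f_def by (metis dvd_div_mult_self)
    then show "x = y" using inj xy by (meson inj_onD)
  qed
  have "submonoid N"
    unfolding submonoid_def N_def
  proof (intro conjI ballI)
    show "0 \<in> f ` M" using sm unfolding submonoid_def f_def by force
    fix a b assume "a \<in> f ` M" "b \<in> f ` M"
    then obtain x y where "x \<in> M" "y \<in> M" "a = f x" "b = f y" by blast
    then show "a + b \<in> f ` M" using sm add unfolding submonoid_def by (metis image_eqI)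
  qed
  moreover have "UNIV - N \<subseteq> {..<F}"
  proof
    fix n assume n: "n \<in> UNIV - N"
    show "n \<in> {..<F}"
    proof (rule ccontr)
      assume "n \<notin> {..<F}"
      then have "g*n \<in> (\<lambda>x. x$j)`M" using F by simp
      then obtain x where "x \<in> M" "x$j = g*n" by (metis (no_types, lifting) imageE)
      then have "f x = n" using g0 by (simp add: f_def)
      then show False using n \<open>x \<in> M\<close> N_def by blast
    qed
  qed
  then have "finite (UNIV - N)" using finite_subset by blast
  ultimately have "numerical_monoid N" by (simp add: numerical_monoid_def)
  moreover have "monoid_iso M N f"
    unfolding monoid_iso_def N_def using injf add by (simp add: bij_betw_def)
  ultimately show ?thesis by blast
qed

lemma len_le_sum: "(\<forall>t\<in>set xs. (1::nat) \<le> h t) \<Longrightarrow> length xs \<le> sum_list (map h xs)"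
  by (induction xs) (auto simp: add_mono)

lemma collin_finite_M:
  fixes M :: "(nat^'d) set"
  assumes sm: "submonoid M" and c: "collin M" and x0: "x0 \<in> M" and j: "x0$j > 0"
  shows "monoid_M M < \<infinity>"
proof -
  obtain g F where g0: "g > 0" and dv: "\<forall>x\<in>M. g dvd x$j" and F1: "F \<ge> 1" and F: "\<forall>n\<ge>F. g*n \<in> (\<lambda>x. x$j)`M"
    and inj: "inj_on (\<lambda>x. x$j) M"
    using collin_setup[OF sm c x0 j] by blast
  have z: "0 \<in> M" using sm by (simp add: submonoid_def)
  have addM: "\<And>x y. x \<in> M \<Longrightarrow> y \<in> M \<Longrightarrow> x + y \<in> M" using sm by (simp add: submonoid_def)
  have pos: "\<And>t. t \<in> M \<Longrightarrow> t \<noteq> 0 \<Longrightarrow> 1 \<le> t$j"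
  proof -
    fix t assume t: "t \<in> M" "t \<noteq> 0"
    show "1 \<le> t$j"
    proof (rule ccontr)
      assume "\<not> 1 \<le> t$j"
      then have "t$j = (0::nat^'d)$j" by simp
      then have "t = 0" using inj t z by (meson inj_onD)
      then show False using t by simp
    qed
  qed
  have lift: "\<And>s a. s \<in> M \<Longrightarrow> a \<in> M \<Longrightarrow> s$j \<ge> a$j + g*F \<Longrightarrow> \<exists>m\<in>M. s = a + m \<and> m$j \<ge> g*F"
  proof -
    fix s a assume s: "s \<in> M" and a: "a \<in> M" and le: "s$j \<ge> a$j + g*F"
    have "g dvd s$j - a$j" using dv s a by (simp add: dvd_diff_nat)
    then obtain t where t: "s$j - a$j = g*t" by blast
    have "g*F \<le> s$j - a$j" using le by arith
    then have gtF: "g*t \<ge> g*F" using t by simp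
    then have "t \<ge> F" using g0 by simp
    then have "g*t \<in> (\<lambda>x. x$j)`M" using F by simp
    then obtain m where m: "m \<in> M" "m$j = g*t" by (metis (no_types, lifting) imageE)
    have "(a + m)$j = s$j" using m t le by simp
    then have "a + m = s" using inj addM[OF a m(1)] s by (meson inj_onD)
    then show "\<exists>m\<in>M. s = a + m \<and> m$j \<ge> g*F" using m gtF by auto
  qed
  have bound: "\<forall>a\<in>atoms M. elem_M M a \<le> enat (2*g*F + x0$j)"
  proof
    fix a assume a: "a \<in> atoms M"
    then have aM: "a \<in> M" using atoms_sub by blast
    have asmall: "a$j < g*F + x0$j"
    proof (rule ccontr)
      assume "\<not> ?thesis"
      then obtain m where m: "m \<in> M" "a = x0 + m" "m$j \<ge> g*F" using lift[OF aM x0] by auto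
      have "0 < g*F" using F1 g0 by simp
      then have "m$j > 0" using m(3) by linarith
      then have "m \<noteq> 0" by auto
      moreover have "x0 \<noteq> 0" using j by auto
      moreover have "\<not> (\<exists>b c. b \<in> M \<and> b \<noteq> 0 \<and> c \<in> M \<and> c \<noteq> 0 \<and> a = b + c)"
        using a unfolding atoms_def by blast
      ultimately show False using m(1,2) x0(1) by blast
    qed
    define n where "n = a$j + g*F"
    have "nsums n M \<subseteq> translate a M"
    proof
      fix s assume "s \<in> nsums n M"
      then obtain xs where xs: "s = sum_list xs" "length xs = n" "set xs \<subseteq> M - {0}"
        unfolding nsums_def by blast
      have sM: "s \<in> M" using xs sum_list_in[OF sm] by blast
      have "n \<le> sum_list (map (\<lambda>t. t$j) xs)" using xs pos len_le_sum[of xs "\<lambda>t. t$j"] by auto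
      then have "s$j \<ge> a$j + g*F" using xs n_def by (simp add: sum_list_nth)
      then obtain m where "m \<in> M" "s = a + m" using lift[OF sM aM] by blast
      then show "s \<in> translate a M" by (auto simp: translate_iff)
    qed
    then have "elem_M M a = enat (LEAST n. nsums n M \<subseteq> translate a M)"
      unfolding elem_M_def by auto
    also have "\<dots> \<le> enat n" using \<open>nsums n M \<subseteq> translate a M\<close> by (simp add: Least_le)
    also have "\<dots> \<le> enat (2*g*F + x0$j)" using asmall n_def by (simp add: mult.commute)
    finally show "elem_M M a \<le> enat (2*g*F + x0$j)" .
  qed
  then have "monoid_M M \<le> enat (2*g*F + x0$j)" unfolding monoid_M_def by (intro SUP_least) (use bound in blast)
  then show ?thesis using enat_ord_simps(4) le_less_trans by (metis enat_ord_code(4))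
qed


theorem mainTheorem19:
  fixes M :: "(nat ^ 'd) set"
  assumes "submonoid M"
    and "strongly_primary M"
  shows "(monoid_M M < \<infinity> \<longleftrightarrow> dim (cone_of (real_vec ` M)) = 1)
       \<and> (dim (cone_of (real_vec ` M)) = 1 \<longleftrightarrow>
            (\<exists>N f. numerical_monoid N \<and> monoid_iso M N f))"
proof -
  have pr: "primary M" and bfm: "BFM M"
    using assms(2) by (auto simp: strongly_primary_def finitary_def)
  obtain x0 where x0: "x0 \<in> M" "x0 \<noteq> 0" using pr assms(1) unfolding primary_def submonoid_def by blast
  then obtain j where j: "x0$j > 0" by (auto simp: vec_eq_iff)
  have A: "monoid_M M < \<infinity> \<Longrightarrow> collin M"
    using finite_atoms[OF assms] collin_of_finite[OF assms(1) pr bfm] by blast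
  have B: "(\<exists>N f. numerical_monoid N \<and> monoid_iso M N f) \<Longrightarrow> collin M"
    using collin_of_iso[OF assms(1)] by blast
  have C: "collin M \<Longrightarrow> dim (cone_of (real_vec ` M)) = 1" using dim_one_if[OF _ x0] .
  have D: "collin M \<Longrightarrow> monoid_M M < \<infinity>" using collin_finite_M[OF assms(1) _ x0(1) j] .
  have E: "collin M \<Longrightarrow> (\<exists>N f. numerical_monoid N \<and> monoid_iso M N f)"
    using collin_numerical[OF assms(1) _ x0(1) j] .
  have F: "dim (cone_of (real_vec ` M)) = 1 \<Longrightarrow> collin M" by (rule collin_if_dim)
  show ?thesis using A B C D E F by argo
qed

end
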